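(* Let $T$ and $T'$ be DFS trees of size $n$. Assume that for every $x_i\in\{x_2,\dots,x_n\}$, if $T_{x_i}=T'_{x_i}$ then $x_i$ has the same parent in $T$ and in $T'$. Then $T=T'$.
   Context: A DFS tree of size $n$ is a rooted tree on the vertex set $\{x_1,\dots,x_n\}$ with root $x_1$ and edges directed away from the root, in which $x_1,\dots,x_n$ is the preorder (depth-first search) order, children visited in increasing order of index. For a vertex $x$, $T_x$ denotes the rooted induced subtree consisting of $x$ and all its descendants; $T_x=T'_x$ means equal vertex and edge sets. *)

theory Defs
  imports Main
begin

text \<open>Vertices x_1,...,x_n are represented by the natural numbers 1,...,n.
A directed tree is given by its edge set E (pairs (parent, child)).\<close>

definition children :: "(nat \<times> nat) set \<Rightarrow> nat \<Rightarrow> nat list" where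
  "children E v = sorted_list_of_set {w. (v, w) \<in> E}"

text \<open>preord E v L: L is the preorder (DFS order, children visited in
increasing order of index) of the subtree rooted at v.\<close>
inductive preord :: "(nat \<times> nat) set \<Rightarrow> nat \<Rightarrow> nat list \<Rightarrow> bool" for E where
  "list_all2 (preord E) (children E v) Ls \<Longrightarrow> preord E v (v # concat Ls)"

definition rooted_tree :: "nat set \<Rightarrow> nat \<Rightarrow> (nat \<times> nat) set \<Rightarrow> bool" where
  "rooted_tree V r E \<longleftrightarrow> r \<in> V \<and> E \<subseteq> V \<times> V
     \<and> (\<forall>u. (u, r) \<notin> E)
     \<and> (\<forall>v \<in> V - {r}. \<exists>!u. (u, v) \<in> E)
     \<and> (\<forall>v \<in> V. (r, v) \<in> E\<^sup>*)"

definition dfs_tree :: "nat \<Rightarrow> (nat \<times> nat) set \<Rightarrow> bool" where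
  "dfs_tree n E \<longleftrightarrow> rooted_tree {1..n} 1 E \<and> preord E 1 [1..<n+1]"

definition subtree_verts :: "(nat \<times> nat) set \<Rightarrow> nat \<Rightarrow> nat set" where
  "subtree_verts E x = {y. (x, y) \<in> E\<^sup>*}"

definition subtree_edges :: "(nat \<times> nat) set \<Rightarrow> nat \<Rightarrow> (nat \<times> nat) set" where
  "subtree_edges E x = E \<inter> (subtree_verts E x \<times> subtree_verts E x)"

definition same_subtree :: "(nat \<times> nat) set \<Rightarrow> (nat \<times> nat) set \<Rightarrow> nat \<Rightarrow> bool" where
  "same_subtree E E' x \<longleftrightarrow> subtree_verts E x = subtree_verts E' x
     \<and> subtree_edges E x = subtree_edges E' x"

definition same_parent :: "(nat \<times> nat) set \<Rightarrow> (nat \<times> nat) set \<Rightarrow> nat \<Rightarrow> bool" where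
  "same_parent E E' x \<longleftrightarrow> (\<forall>u. (u, x) \<in> E \<longleftrightarrow> (u, x) \<in> E')"

end

theory Submission
  imports Defs
begin

lemma children_set:
  assumes "finite E"
  shows "set (children E v) = {w. (v, w) \<in> E}"
proof -
  have "{w. (v, w) \<in> E} \<subseteq> snd ` E" by (auto intro: rev_image_eqI)
  hence "finite {w. (v, w) \<in> E}" using assms finite_subset by blast
  thus ?thesis unfolding children_def by simp
qed

lemma preord_hd:
  assumes "preord E v L"
  shows "\<exists>r. L = v # r"
  using assms by (cases rule: preord.cases) auto

lemma preord_child:
  assumes "preord E u L" "finite E" "(u, v) \<in> E"
  shows "\<exists>r. L = u # r \<and> v \<in> set r"
  using assms(1)
proof (cases rule: preord.cases)
  case (1 Ls)
  have la: "list_all2 (preord E) (children E u) Ls" and LL: "L = u # concat Ls" using 1 by auto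
  have "v \<in> set (children E u)" using children_set[OF assms(2)] assms(3) by auto
  then obtain j where j: "j < length (children E u)" "children E u ! j = v"
    by (auto simp: in_set_conv_nth)
  have len: "length Ls = length (children E u)" by (rule list_all2_lengthD[OF la, symmetric])
  have "preord E v (Ls ! j)" using list_all2_nthD[OF la j(1)] j(2) by simp
  then obtain r where "Ls ! j = v # r" using preord_hd by blast
  moreover have "Ls ! j \<in> set Ls" using j len by simp
  moreover have "v \<in> set (Ls ! j)" using \<open>Ls ! j = v # r\<close> by simp
  ultimately have "v \<in> set (concat Ls)" unfolding set_concat by blast
  thus ?thesis using LL by auto
qed

lemma preord_segment:
  assumes "preord E w L" "finite E"
  shows "(w, u) \<in> E\<^sup>* \<Longrightarrow> \<exists>a b Lu. L = a @ Lu @ b \<and> preord E u Lu"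
  using assms(1)
proof (induction arbitrary: u rule: preord.induct)
  case (1 v Ls)
  show ?case
  proof (cases "u = v")
    case True
    have "list_all2 (preord E) (children E v) Ls" using 1(1) by (rule list_all2_mono) simp
    hence "preord E v (v # concat Ls)" by (rule preord.intros)
    hence "v # concat Ls = [] @ (v # concat Ls) @ [] \<and> preord E u (v # concat Ls)" using True by simp
    then show ?thesis by blast
  next
    case False
    then obtain c where c: "(v, c) \<in> E" "(c, u) \<in> E\<^sup>*" using 1(2)
      by (metis converse_rtranclE)
    have "c \<in> set (children E v)" using children_set[OF assms(2)] c by auto
    then obtain j where j: "j < length (children E v)" "children E v ! j = c"
      by (auto simp: in_set_conv_nth)
    have len: "length Ls = length (children E v)" by (rule list_all2_lengthD[OF 1(1), symmetric])
    have "preord E c (Ls ! j) \<and> (\<forall>u. (c, u) \<in> E\<^sup>* \<longrightarrow> (\<exists>a b Lu. Ls ! j = a @ Lu @ b \<and> preord E u Lu))"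
      using list_all2_nthD[OF 1(1) j(1)] j(2) by simp
    then obtain a b Lu where ab: "Ls ! j = a @ Lu @ b" "preord E u Lu" using c(2) by blast
    have "Ls = take j Ls @ Ls ! j # drop (Suc j) Ls" using j len
      by (simp add: id_take_nth_drop)
    hence "concat Ls = concat (take j Ls @ Ls ! j # drop (Suc j) Ls)" by simp
    hence "concat Ls = concat (take j Ls) @ Ls ! j @ concat (drop (Suc j) Ls)" by simp
    hence "v # concat Ls = (v # concat (take j Ls) @ a) @ Lu @ (b @ concat (drop (Suc j) Ls))"
      using ab by simp
    thus ?thesis using ab by blast
  qed
qed

lemma dfs_edge_less:
  assumes "dfs_tree n E" "(u, v) \<in> E"
  shows "u < v"
proof -
  have rt: "rooted_tree {1..n} 1 E" and po: "preord E 1 [1..<n+1]"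
    using assms(1) by (auto simp: dfs_tree_def)
  have fin: "finite E" using rt finite_subset[of E "{1..n} \<times> {1..n}"] unfolding rooted_tree_def by auto
  have "u \<in> {1..n}" using rt assms(2) unfolding rooted_tree_def by auto
  hence "(1, u) \<in> E\<^sup>*" using rt unfolding rooted_tree_def by auto
  then obtain a b Lu where L: "[1..<n+1] = a @ Lu @ b" "preord E u Lu"
    using preord_segment[OF po fin] by blast
  obtain r where r: "Lu = u # r" "v \<in> set r" using preord_child[OF L(2) fin assms(2)] by blast
  have "sorted_wrt (<) [1..<n+1]" by (rule sorted_wrt_upt)
  hence "sorted_wrt (<) (a @ (u # r @ b))" unfolding L(1) r(1) by simp
  hence "sorted_wrt (<) (u # r @ b)" by (simp only: sorted_wrt_append)
  hence "\<forall>y \<in> set (r @ b). u < y" by (simp only: sorted_wrt.simps) blast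
  thus ?thesis using r(2) by simp
qed

lemma dfs_desc_le:
  assumes "dfs_tree n E" "(i, y) \<in> E\<^sup>*"
  shows "i \<le> y"
  using assms(2)
proof (induction rule: rtrancl_induct)
  case base
  then show ?case by simp
next
  case (step y z)
  have "y < z" by (rule dfs_edge_less[OF assms(1) step(2)])
  then show ?case using step(3) by simp
qed

lemma transfer_desc:
  assumes "dfs_tree n E" "\<forall>u v. i < v \<longrightarrow> ((u, v) \<in> E \<longrightarrow> (u, v) \<in> E')"
    and "(i, y) \<in> E\<^sup>*"
  shows "(i, y) \<in> E'\<^sup>*"
  using assms(3)
proof (induction rule: rtrancl_induct)
  case base
  then show ?case by simp
next
  case (step y z)
  have "i \<le> y" using dfs_desc_le[OF assms(1) step(1)] .
  moreover have "y < z" using dfs_edge_less[OF assms(1) step(2)] .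
  ultimately have "(y, z) \<in> E'" using assms(2) step(2) by auto
  then show ?case using step(3) by (simp add: rtrancl_into_rtrancl)
qed

theorem lemma6p13:
  fixes n :: nat and E E' :: "(nat \<times> nat) set"
  assumes "dfs_tree n E" and "dfs_tree n E'"
    and "\<forall>i \<in> {2..n}. same_subtree E E' i \<longrightarrow> same_parent E E' i"
  shows "E = E'"
proof -
  have rt: "rooted_tree {1..n} 1 E" "rooted_tree {1..n} 1 E'"
    using assms(1,2) by (auto simp: dfs_tree_def)
  have inV: "v \<in> {2..n}" if "(u, v) \<in> E \<or> (u, v) \<in> E'" for u v
  proof -
    have "v \<in> {1..n}" "v \<noteq> 1" using rt that unfolding rooted_tree_def by auto
    thus ?thesis by auto
  qed
  have SP: "same_parent E E' i" if "i \<in> {2..n}" for i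
    using that
  proof (induction "n - i" arbitrary: i rule: less_induct)
    case less
    have H: "(u, v) \<in> E \<longleftrightarrow> (u, v) \<in> E'" if "i < v" for u v
    proof (cases "(u, v) \<in> E \<or> (u, v) \<in> E'")
      case True
      hence "v \<in> {2..n}" using inV by blast
      moreover have "n - v < n - i" using \<open>i < v\<close> calculation by auto
      ultimately have "same_parent E E' v" using less(1) by blast
      thus ?thesis unfolding same_parent_def by blast
    qed auto
    have H1: "\<forall>u v. i < v \<longrightarrow> ((u, v) \<in> E \<longrightarrow> (u, v) \<in> E')" using H by blast
    have H2: "\<forall>u v. i < v \<longrightarrow> ((u, v) \<in> E' \<longrightarrow> (u, v) \<in> E)" using H by blast
    have SV: "subtree_verts E i = subtree_verts E' i"
      unfolding subtree_verts_def
      using transfer_desc[OF assms(1) H1] transfer_desc[OF assms(2) H2] by blast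
    have SE: "subtree_edges E i = subtree_edges E' i"
    proof -
      have "(u, v) \<in> E \<longleftrightarrow> (u, v) \<in> E'" if "u \<in> subtree_verts E i" "(u, v) \<in> E \<or> (u, v) \<in> E'" for u v
      proof -
        have "i \<le> u" using that(1) SV dfs_desc_le[OF assms(1)] unfolding subtree_verts_def by blast
        moreover have "u < v" using that(2) dfs_edge_less[OF assms(1)] dfs_edge_less[OF assms(2)] by blast
        ultimately show ?thesis using H by auto
      qed
      thus ?thesis unfolding subtree_edges_def using SV by blast
    qed
    have "same_subtree E E' i" unfolding same_subtree_def using SV SE by blast
    thus ?case using assms(3) less(2) by blast
  qed
  show ?thesis
  proof (intro set_eqI iffI)
    fix x assume "x \<in> E"
    then obtain u v where x: "x = (u, v)" "(u, v) \<in> E" by (cases x) auto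
    thus "x \<in> E'" using SP[of v] inV[of u v] unfolding same_parent_def by blast
  next
    fix x assume "x \<in> E'"
    then obtain u v where x: "x = (u, v)" "(u, v) \<in> E'" by (cases x) auto
    thus "x \<in> E" using SP[of v] inV[of u v] unfolding same_parent_def by blast
  qed
qed

end
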